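(* Let $f=\|\cdot\|$ be an arbitrary (not necessarily Euclidean) norm on $\mathbb{R}^n$. Then: (i) for every $v\in\partial f(0)$, $f$ is twice epi-differentiable at $0$ for $v$ and $d^2f(0|v)=\delta_{K(0,v)}$; (ii) for $v\in\partial f(0)$, $f$ is generalized twice differentiable at $0$ for $v$ if and only if $v\in\operatorname{int}\partial f(0)$.
   Context: $\partial f$ is the convex subdifferential. First subderivative: $df(\bar x)(w)=\liminf_{t\downarrow0,w'\to w}\frac{f(\bar x+tw')-f(\bar x)}{t}$; critical cone $K(\bar x,\bar v)=\{w:df(\bar x)(w)=\langle\bar v,w\rangle\}$. $\delta_C$ is the indicator of $C$ ($0$ on $C$, $\infty$ off $C$). Second subderivative $d^2f(\bar x|\bar v)(w)=\liminf_{t\downarrow0,w'\to w}\Delta^2_tf(\bar x|\bar v)(w')$ with $\Delta_t^2f(\bar x|\bar v)(w)=\frac{f(\bar x+tw)-f(\bar x)-t\langle\bar v,w\rangle}{\frac12t^2}$; twice epi-differentiability at $\bar x$ for $\bar v$ means $\Delta_t^2f(\bar x|\bar v)$ epi-converges as $t\downarrow0$. A generalized quadratic form is $\frac12\langle\cdot,A\cdot\rangle+\delta_L$, $A$ symmetric, $L$ a linear subspace; generalized twice differentiability at $\bar x$ for $\bar v\in\partial f(\bar x)$ means twice epi-differentiability with $d^2f(\bar x|\bar v)$ a generalized quadratic form. *)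

theory Defs
  imports "HOL-Analysis.Analysis"
begin

definition is_norm :: "('a::euclidean_space \<Rightarrow> real) \<Rightarrow> bool" where
  "is_norm f \<longleftrightarrow> (\<forall>x. 0 \<le> f x) \<and> (\<forall>x. f x = 0 \<longleftrightarrow> x = 0) \<and>
     (\<forall>c x. f (c *\<^sub>R x) = \<bar>c\<bar> * f x) \<and> (\<forall>x y. f (x + y) \<le> f x + f y)"

definition subdiff :: "('a::euclidean_space \<Rightarrow> real) \<Rightarrow> 'a \<Rightarrow> 'a set" where
  "subdiff f x = {v. \<forall>y. f y \<ge> f x + v \<bullet> (y - x)}"

definition indic :: "'a set \<Rightarrow> 'a \<Rightarrow> ereal" where
  "indic C w = (if w \<in> C then 0 else \<infinity>)"

definition subderiv1 :: "('a::euclidean_space \<Rightarrow> real) \<Rightarrow> 'a \<Rightarrow> 'a \<Rightarrow> ereal" where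
  "subderiv1 f x w = Liminf (at (0, w) within ({0<..} \<times> UNIV))
      (\<lambda>(t, w'). ereal ((f (x + t *\<^sub>R w') - f x) / t))"

definition crit_cone :: "('a::euclidean_space \<Rightarrow> real) \<Rightarrow> 'a \<Rightarrow> 'a \<Rightarrow> 'a set" where
  "crit_cone f x v = {w. subderiv1 f x w = ereal (v \<bullet> w)}"

definition diff_quot2 :: "('a::euclidean_space \<Rightarrow> real) \<Rightarrow> 'a \<Rightarrow> 'a \<Rightarrow> real \<Rightarrow> 'a \<Rightarrow> ereal" where
  "diff_quot2 f x v t w = ereal ((f (x + t *\<^sub>R w) - f x - t * (v \<bullet> w)) / (t\<^sup>2 / 2))"

definition subderiv2 :: "('a::euclidean_space \<Rightarrow> real) \<Rightarrow> 'a \<Rightarrow> 'a \<Rightarrow> 'a \<Rightarrow> ereal" where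
  "subderiv2 f x v w = Liminf (at (0, w) within ({0<..} \<times> UNIV))
      (\<lambda>(t, w'). diff_quot2 f x v t w')"

definition epi_conv :: "(real \<Rightarrow> 'a::euclidean_space \<Rightarrow> ereal) \<Rightarrow> ('a \<Rightarrow> ereal) \<Rightarrow> bool" where
  "epi_conv g G \<longleftrightarrow>
     (\<forall>tk. (\<forall>k. tk k > 0) \<and> tk \<longlonglongrightarrow> 0 \<longrightarrow>
        (\<forall>w. (\<forall>wk. wk \<longlonglongrightarrow> w \<longrightarrow> G w \<le> liminf (\<lambda>k. g (tk k) (wk k))) \<and>
             (\<exists>wk. wk \<longlonglongrightarrow> w \<and> limsup (\<lambda>k. g (tk k) (wk k)) \<le> G w)))"

definition twice_epi_diff :: "('a::euclidean_space \<Rightarrow> real) \<Rightarrow> 'a \<Rightarrow> 'a \<Rightarrow> bool" where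
  "twice_epi_diff f x v \<longleftrightarrow> (\<exists>G. epi_conv (diff_quot2 f x v) G)"

definition gen_quad_form :: "('a::euclidean_space \<Rightarrow> ereal) \<Rightarrow> bool" where
  "gen_quad_form q \<longleftrightarrow> (\<exists>A L. linear A \<and> (\<forall>x y. A x \<bullet> y = x \<bullet> A y) \<and> subspace L \<and>
      q = (\<lambda>w. ereal (1/2 * (w \<bullet> A w)) + indic L w))"

definition gen_twice_diff :: "('a::euclidean_space \<Rightarrow> real) \<Rightarrow> 'a \<Rightarrow> 'a \<Rightarrow> bool" where
  "gen_twice_diff f x v \<longleftrightarrow> v \<in> subdiff f x \<and> twice_epi_diff f x v \<and>
      gen_quad_form (subderiv2 f x v)"

end

theory Submission imports Defs begin

lemma nrm_basic:
  assumes "is_norm f"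
  shows "f 0 = 0" "\<And>x. f (- x) = f x" "\<And>x. 0 \<le> f x"
    "\<And>c x. c \<ge> 0 \<Longrightarrow> f (c *\<^sub>R x) = c * f x"
    "\<And>x y. f (x + y) \<le> f x + f y"
  using assms unfolding is_norm_def
  apply auto
  apply (metis abs_neg_one mult_1 scaleR_minus1_left)
  done

lemma nrm_cont:
  fixes f :: "'a::euclidean_space \<Rightarrow> real"
  assumes "is_norm f"
  shows "continuous_on UNIV f"
proof (rule convex_on_continuous)
  show "convex_on UNIV f"
  proof (rule convex_onI)
    fix t :: real and x y :: 'a assume t: "t > 0" "t < 1"
    have "f ((1 - t) *\<^sub>R x + t *\<^sub>R y) \<le> f ((1 - t) *\<^sub>R x) + f (t *\<^sub>R y)"
      using nrm_basic(5)[OF assms] by blast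
    also have "\<dots> = (1 - t) * f x + t * f y"
      using nrm_basic(4)[OF assms] t by simp
    finally show "f ((1 - t) *\<^sub>R x + t *\<^sub>R y) \<le> (1 - t) * f x + t * f y" .
  qed simp
qed simp

lemma nrm_isCont:
  assumes "is_norm f" shows "isCont f x"
  using nrm_cont[OF assms] by (simp add: continuous_on_eq_continuous_at)

lemma dq2_eq:
  assumes "is_norm f" "t > 0"
  shows "diff_quot2 f 0 v t w = ereal (2 * (f w - v \<bullet> w) / t)"
proof -
  have "f (t *\<^sub>R w) = t * f w" using nrm_basic(4)[OF assms(1)] assms(2) by simp
  then show ?thesis unfolding diff_quot2_def using assms(2) nrm_basic(1)[OF assms(1)]
    by (simp add: power2_eq_square field_simps)
qed

lemma ntriv:
  fixes w :: "'a::euclidean_space"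
  shows "at ((0::real), w) within ({0<..} \<times> UNIV) \<noteq> bot"
proof -
  have "((0::real), w) islimpt ({0<..} \<times> UNIV)"
    unfolding islimpt_approachable
  proof (intro allI impI)
    fix e :: real assume e: "e > 0"
    have 1: "(e/2,w) \<in> {0<..} \<times> (UNIV::'a set)" using e by simp
    have 2: "(e/2,w) \<noteq> (0,w)" using e by simp
    have "dist (e/2,w) (0,w) = e/2" using e by (simp add: dist_Pair_Pair)
    then have 3: "dist (e/2,w) (0,w) < e" using e by simp
    show "\<exists>x'\<in>{0<..} \<times> UNIV. x' \<noteq> ((0::real), w) \<and> dist x' ((0::real), w) < e"
      using 1 2 3 by blast
  qed
  then show ?thesis using trivial_limit_within by blast
qed

lemma blowup:
  fixes T :: "'b \<Rightarrow> real" and H :: "'b \<Rightarrow> real"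
  assumes "(T \<longlongrightarrow> 0) F" "(H \<longlongrightarrow> c) F" "eventually (\<lambda>x. T x > 0) F" "c > 0"
  shows "((\<lambda>x. ereal (2 * H x / T x)) \<longlongrightarrow> \<infinity>) F"
  unfolding tendsto_PInfty
proof
  fix r :: real
  define d where "d = c / (2 * (\<bar>r\<bar> + 1))"
  have d: "d > 0" using assms(4) unfolding d_def by (intro divide_pos_pos) auto
  have "eventually (\<lambda>x. H x > c/2) F" using order_tendstoD(1)[OF assms(2), of "c/2"] assms(4) by simp
  moreover have "eventually (\<lambda>x. T x < d) F" using order_tendstoD(2)[OF assms(1) d] .
  ultimately have "eventually (\<lambda>x. H x > c/2 \<and> T x < d \<and> T x > 0) F"
    using assms(3) by (simp add: eventually_conj_iff)
  then show "eventually (\<lambda>x. ereal r < ereal (2 * H x / T x)) F"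
  proof (rule eventually_mono)
    fix x assume h: "H x > c/2 \<and> T x < d \<and> T x > 0"
    have "T x * (2 * (\<bar>r\<bar> + 1)) < c"
      using h pos_less_divide_eq[of "2 * (\<bar>r\<bar> + 1)" "T x" c] unfolding d_def by (smt (verit))
    then have "2 * (\<bar>r\<bar> + 1) < c / T x" using h pos_less_divide_eq[of "T x"] by (simp add: mult.commute)
    also have "c / T x < 2 * H x / T x" using h by (simp add: divide_strict_right_mono)
    finally show "ereal r < ereal (2 * H x / T x)" by simp
  qed
qed


lemma ev_pos:
  "eventually (\<lambda>p. fst p > (0::real)) (at ((0::real), w) within ({0<..} \<times> UNIV))"
  unfolding eventually_at_filter by (auto intro: always_eventually)

lemma snd_lim:
  "((\<lambda>p. snd p) \<longlongrightarrow> w) (at ((0::real), w) within ({0<..} \<times> UNIV))"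
  using tendsto_snd[OF tendsto_ident_at[of "((0::real), w)"]] by simp

lemma fst_lim:
  "((\<lambda>p. fst p) \<longlongrightarrow> 0) (at ((0::real), w) within ({0<..} \<times> UNIV))"
  using tendsto_fst[OF tendsto_ident_at[of "((0::real), w)"]] by simp

lemma sub1:
  fixes f :: "'a::euclidean_space \<Rightarrow> real"
  assumes "is_norm f"
  shows "subderiv1 f 0 w = ereal (f w)"
  unfolding subderiv1_def
proof (rule lim_imp_Liminf[OF ntriv])
  have "((\<lambda>p. f (snd p)) \<longlongrightarrow> f w) (at ((0::real), w) within ({0<..} \<times> UNIV))"
    using isCont_tendsto_compose[OF nrm_isCont[OF assms] snd_lim] .
  then have L: "((\<lambda>p. ereal (f (snd p))) \<longlongrightarrow> ereal (f w)) (at ((0::real), w) within ({0<..} \<times> UNIV))"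
    by (rule tendsto_ereal)
  have "eventually (\<lambda>p. ereal (f (snd p)) = (\<lambda>(t, w'). ereal ((f (0 + t *\<^sub>R w') - f 0) / t)) p)
      (at ((0::real), w) within ({0<..} \<times> UNIV))"
    using ev_pos
  proof (rule eventually_mono)
    fix p :: "real \<times> 'a" assume "fst p > 0"
    then show "ereal (f (snd p)) = (\<lambda>(t, w'). ereal ((f (0 + t *\<^sub>R w') - f 0) / t)) p"
      using nrm_basic[OF assms] by (cases p) auto
  qed
  then show "((\<lambda>(t, w'). ereal ((f (0 + t *\<^sub>R w') - f 0) / t)) \<longlongrightarrow> ereal (f w))
      (at (0, w) within {0<..} \<times> UNIV)"
    using Lim_transform_eventually[OF L] by blast
qed

lemma subdiff_ge:
  assumes "is_norm f" "v \<in> subdiff f 0"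
  shows "v \<bullet> y \<le> f y"
  using assms nrm_basic(1)[OF assms(1)] unfolding subdiff_def by auto

lemma sub2:
  fixes f :: "'a::euclidean_space \<Rightarrow> real"
  assumes "is_norm f" "v \<in> subdiff f 0"
  shows "subderiv2 f 0 v w = indic {w. f w = v \<bullet> w} w"
proof -
  let ?F = "at ((0::real), w) within ({0<..} \<times> UNIV)"
  let ?g = "\<lambda>(t, w'). diff_quot2 f 0 v t w'"
  have ev: "eventually (\<lambda>p. ?g p = ereal (2 * (f (snd p) - v \<bullet> snd p) / fst p)) ?F"
    using ev_pos by (rule eventually_mono) (auto simp: dq2_eq[OF assms(1)])
  show ?thesis
  proof (cases "f w = v \<bullet> w")
    case True
    have "0 \<le> Liminf ?F ?g"
    proof (rule Liminf_bounded)
      show "eventually (\<lambda>p. 0 \<le> ?g p) ?F"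
        using eventually_conj[OF ev ev_pos]
      proof (rule eventually_mono)
        fix p :: "real \<times> 'a" assume "?g p = ereal (2 * (f (snd p) - v \<bullet> snd p) / fst p) \<and> fst p > 0"
        moreover have "v \<bullet> snd p \<le> f (snd p)" using subdiff_ge[OF assms] .
        ultimately show "0 \<le> ?g p" by simp
      qed
    qed
    moreover have "Liminf ?F ?g \<le> 0"
      unfolding Liminf_def
    proof (rule SUP_least)
      fix P assume "P \<in> {P. eventually P ?F}"
      then obtain d where d: "d > 0" "\<And>x. x \<in> {0<..} \<times> UNIV \<Longrightarrow> x \<noteq> (0, w) \<Longrightarrow> dist x (0, w) < d \<Longrightarrow> P x"
        unfolding eventually_at by auto
      have "dist (d/2,w) (0,w) = d/2" using d by (simp add: dist_Pair_Pair)
      then have "P (d/2, w)" using d by (intro d(2)) auto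
      moreover have "?g (d/2, w) = 0" using True d by (simp add: dq2_eq[OF assms(1)])
      ultimately show "(INF x\<in>{x. P x}. ?g x) \<le> 0"
        by (metis INF_lower mem_Collect_eq)
    qed
    ultimately show ?thesis using True unfolding subderiv2_def indic_def by simp
  next
    case False
    have pos: "f w - v \<bullet> w > 0" using False subdiff_ge[OF assms, of w] by simp
    have H: "((\<lambda>p. f (snd p) - v \<bullet> snd p) \<longlongrightarrow> f w - v \<bullet> w) ?F"
      by (intro tendsto_intros isCont_tendsto_compose[OF nrm_isCont[OF assms(1)] snd_lim] snd_lim)
    have "((\<lambda>p. ereal (2 * (f (snd p) - v \<bullet> snd p) / fst p)) \<longlongrightarrow> \<infinity>) ?F"
      by (rule blowup[OF fst_lim H ev_pos pos])
    then have "(?g \<longlongrightarrow> \<infinity>) ?F"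
      using Lim_transform_eventually[OF _ eventually_mono[OF ev sym]] by blast
    then have "Liminf ?F ?g = \<infinity>" by (rule lim_imp_Liminf[OF ntriv])
    then show ?thesis using False unfolding subderiv2_def indic_def by simp
  qed
qed


lemma epi:
  fixes f :: "'a::euclidean_space \<Rightarrow> real"
  assumes "is_norm f" "v \<in> subdiff f 0"
  shows "epi_conv (diff_quot2 f 0 v) (indic {w. f w = v \<bullet> w})"
  unfolding epi_conv_def
proof (intro allI impI)
  fix tk :: "nat \<Rightarrow> real" and w :: 'a
  assume tk: "(\<forall>k. tk k > 0) \<and> tk \<longlonglongrightarrow> 0"
  show "(\<forall>wk. wk \<longlonglongrightarrow> w \<longrightarrow> indic {w. f w = v \<bullet> w} w \<le> liminf (\<lambda>k. diff_quot2 f 0 v (tk k) (wk k))) \<and>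
    (\<exists>wk. wk \<longlonglongrightarrow> w \<and> limsup (\<lambda>k. diff_quot2 f 0 v (tk k) (wk k)) \<le> indic {w. f w = v \<bullet> w} w)"
  proof (rule conjI)
  show "\<forall>wk. wk \<longlonglongrightarrow> w \<longrightarrow> indic {w. f w = v \<bullet> w} w \<le> liminf (\<lambda>k. diff_quot2 f 0 v (tk k) (wk k))"
  proof (intro allI impI)
    fix wk assume wk: "wk \<longlonglongrightarrow> w"
    have ev: "\<And>k. diff_quot2 f 0 v (tk k) (wk k) = ereal (2 * (f (wk k) - v \<bullet> wk k) / tk k)"
      using dq2_eq[OF assms(1)] tk by blast
    show "indic {w. f w = v \<bullet> w} w \<le> liminf (\<lambda>k. diff_quot2 f 0 v (tk k) (wk k))"
    proof (cases "f w = v \<bullet> w")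
      case True
      have "0 \<le> liminf (\<lambda>k. diff_quot2 f 0 v (tk k) (wk k))"
      proof (rule Liminf_bounded, rule always_eventually, rule allI)
        fix k
        have "v \<bullet> wk k \<le> f (wk k)" using subdiff_ge[OF assms] .
        moreover have "tk k > 0" using tk by blast
        ultimately show "0 \<le> diff_quot2 f 0 v (tk k) (wk k)" unfolding ev by simp
      qed
      then show ?thesis using True unfolding indic_def by simp
    next
      case False
      have pos: "f w - v \<bullet> w > 0" using False subdiff_ge[OF assms, of w] by simp
      have H: "((\<lambda>k. f (wk k) - v \<bullet> wk k) \<longlongrightarrow> f w - v \<bullet> w) sequentially"
        by (intro tendsto_intros isCont_tendsto_compose[OF nrm_isCont[OF assms(1)] wk] wk)
      have "((\<lambda>k. ereal (2 * (f (wk k) - v \<bullet> wk k) / tk k)) \<longlongrightarrow> \<infinity>) sequentially"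
        by (rule blowup) (use tk H pos in auto)
      then have "liminf (\<lambda>k. diff_quot2 f 0 v (tk k) (wk k)) = \<infinity>"
        unfolding ev by (intro lim_imp_Liminf) auto
      then show ?thesis by simp
    qed
  qed
  show "\<exists>wk. wk \<longlonglongrightarrow> w \<and> limsup (\<lambda>k. diff_quot2 f 0 v (tk k) (wk k)) \<le> indic {w. f w = v \<bullet> w} w"
  proof (cases "f w = v \<bullet> w")
    case True
    have "\<And>k. diff_quot2 f 0 v (tk k) w = 0"
      using dq2_eq[OF assms(1)] tk True by (simp add: zero_ereal_def)
    then show ?thesis using True unfolding indic_def
      by (intro exI[where x="\<lambda>k. w"]) (simp add: Limsup_const)
  next
    case False
    then show ?thesis unfolding indic_def by (intro exI[where x="\<lambda>k. w"]) simp
  qed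
qed
qed

lemma gq:
  "gen_quad_form (indic K) \<longleftrightarrow> subspace (K :: 'a::euclidean_space set)"
proof
  assume "gen_quad_form (indic K)"
  then obtain A L where L: "subspace L" and eq: "indic K = (\<lambda>w. ereal (1/2 * (w \<bullet> A w)) + indic L w)"
    unfolding gen_quad_form_def by blast
  have "K = L"
  proof (intro set_eqI iffI)
    fix w assume "w \<in> K"
    then have "indic K w = 0" by (simp add: indic_def)
    moreover have "indic K w = ereal (1/2 * (w \<bullet> A w)) + indic L w" using eq by simp
    ultimately show "w \<in> L" by (auto simp: indic_def split: if_splits)
  next
    fix w assume "w \<in> L"
    moreover have "indic K w = ereal (1/2 * (w \<bullet> A w)) + indic L w" using eq by simp
    ultimately have "indic K w \<noteq> \<infinity>" by (simp add: indic_def)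
    then show "w \<in> K" by (simp add: indic_def split: if_splits)
  qed
  then show "subspace K" using L by simp
next
  assume "subspace K"
  moreover have "linear (\<lambda>x::'a. 0)" by (rule linearI) auto
  moreover have "indic K = (\<lambda>w. ereal (1/2 * (w \<bullet> (\<lambda>x::'a. 0) w)) + indic K w)"
    by (simp add: fun_eq_iff)
  ultimately show "gen_quad_form (indic K)" unfolding gen_quad_form_def
    apply (intro exI[where x="\<lambda>x::'a. 0"] exI[where x=K])
    by simp
qed


lemma intr:
  fixes f :: "'a::euclidean_space \<Rightarrow> real"
  assumes nf: "is_norm f" and v: "v \<in> subdiff f 0"
  shows "subspace {w. f w = v \<bullet> w} \<longleftrightarrow> v \<in> interior (subdiff f 0)"
proof
  assume sK: "subspace {w. f w = v \<bullet> w}"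
  have gt: "f w > v \<bullet> w" if "w \<noteq> 0" for w
  proof (rule ccontr)
    assume "\<not> f w > v \<bullet> w"
    then have "f w = v \<bullet> w" using subdiff_ge[OF nf v, of w] by simp
    then have "f (- w) = v \<bullet> (- w)" using subspace_neg[OF sK] by blast
    then have "f w = 0" using \<open>f w = v \<bullet> w\<close> nrm_basic(2)[OF nf, of w] by simp
    then show False using nf that unfolding is_norm_def by blast
  qed
  define g where "g w = f w - v \<bullet> w" for w
  have "continuous_on (sphere (0::'a) 1) g"
    unfolding g_def
    by (intro continuous_intros continuous_on_subset[OF nrm_cont[OF nf]]) auto
  then obtain m0 where m0: "m0 \<in> sphere 0 1" "\<And>y. y \<in> sphere 0 1 \<Longrightarrow> g m0 \<le> g y"
    using continuous_attains_inf[of "sphere (0::'a) 1" g] by auto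
  define m where "m = g m0"
  have "m0 \<noteq> 0" using m0(1) by auto
  then have mpos: "m > 0" using gt[of m0] unfolding m_def g_def by auto
  have gm: "g y \<ge> m * norm y" for y
  proof (cases "y = 0")
    case True then show ?thesis using nrm_basic(1)[OF nf] by (simp add: g_def)
  next
    case False
    let ?y = "(1 / norm y) *\<^sub>R y"
    have "?y \<in> sphere 0 1" using False by simp
    then have "m \<le> g ?y" using m0(2) unfolding m_def by blast
    also have "g ?y = g y / norm y"
      using nrm_basic(4)[OF nf, of "1 / norm y" y] unfolding g_def
      by (simp add: inner_scaleR_right diff_divide_distrib)
    finally show ?thesis using False by (simp add: pos_le_divide_eq)
  qed
  have "ball v m \<subseteq> subdiff f 0"
  proof
    fix u assume "u \<in> ball v m"
    then have du: "norm (u - v) < m" by (simp add: dist_norm norm_minus_commute)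
    have "u \<bullet> y \<le> f y" for y
    proof -
      have "(u - v) \<bullet> y \<le> norm (u - v) * norm y" by (rule norm_cauchy_schwarz)
      also have "\<dots> \<le> m * norm y" using du by (simp add: mult_right_mono)
      also have "\<dots> \<le> g y" by (rule gm)
      finally show ?thesis unfolding g_def by (simp add: inner_diff_left)
    qed
    then show "u \<in> subdiff f 0" unfolding subdiff_def using nrm_basic(1)[OF nf] by simp
  qed
  then show "v \<in> interior (subdiff f 0)" using mpos mem_interior by blast
next
  assume "v \<in> interior (subdiff f 0)"
  then obtain e where e: "e > 0" "ball v e \<subseteq> subdiff f 0" using mem_interior by blast
  have "{w. f w = v \<bullet> w} = {0}"
  proof (intro set_eqI iffI)
    fix w assume w: "w \<in> {w. f w = v \<bullet> w}"
    show "w \<in> {0}"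
    proof (rule ccontr)
      assume "w \<notin> {0}"
      then have nz: "norm w > 0" by simp
      define u where "u = v + (e / 2 / norm w) *\<^sub>R w"
      have "dist v u = e / 2" using nz e unfolding u_def by (simp add: dist_norm)
      then have "u \<in> subdiff f 0" using e by auto
      then have "u \<bullet> w \<le> f w" using subdiff_ge[OF nf] by blast
      moreover have "u \<bullet> w = v \<bullet> w + e / 2 * norm w"
        using nz unfolding u_def by (simp add: inner_add_left dot_square_norm power2_eq_square)
      ultimately have "e * norm w \<le> 0" using w by simp
      moreover have "e * norm w > 0" using e nz by simp
      ultimately show False by linarith
    qed
  next
    fix w :: 'a assume "w \<in> {0}" then show "w \<in> {w. f w = v \<bullet> w}" using nrm_basic(1)[OF nf] by simp
  qed
  then show "subspace {w. f w = v \<bullet> w}" by simp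
qed

theorem theorem4p3:
  fixes f :: "'a::euclidean_space \<Rightarrow> real"
  assumes "is_norm f"
  shows "(\<forall>v \<in> subdiff f 0. twice_epi_diff f 0 v \<and>
            subderiv2 f 0 v = indic (crit_cone f 0 v))
       \<and> (\<forall>v \<in> subdiff f 0. gen_twice_diff f 0 v \<longleftrightarrow> v \<in> interior (subdiff f 0))"
proof -
  have cc: "crit_cone f 0 v = {w. f w = v \<bullet> w}" for v
    unfolding crit_cone_def sub1[OF assms] by simp
  have s2: "subderiv2 f 0 v = indic {w. f w = v \<bullet> w}" if "v \<in> subdiff f 0" for v
    using sub2[OF assms that] by (simp add: fun_eq_iff)
  have te: "twice_epi_diff f 0 v" if "v \<in> subdiff f 0" for v
    unfolding twice_epi_diff_def using epi[OF assms that] by blast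
  show ?thesis
  proof (intro conjI ballI)
    fix v assume v: "v \<in> subdiff f 0"
    show "twice_epi_diff f 0 v" using te[OF v] .
    show "subderiv2 f 0 v = indic (crit_cone f 0 v)" using s2[OF v] cc by simp
    show "gen_twice_diff f 0 v \<longleftrightarrow> v \<in> interior (subdiff f 0)"
      unfolding gen_twice_diff_def s2[OF v] gq intr[OF assms v] using v te[OF v] by blast
  qed
qed

end
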